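(* Let $m,k\in\mathbb{N}$. Then \[ {}_3F_2\left[\begin{array}{r} -2m,\ 1+k,\ 1+k;\\ -2m-k,\ -2m-k;\end{array}1\right]_{2m}=\frac{(1+k)_{m}(1+k)_{m}2^{2m}\left(\frac{1}{2}\right)_m(2+2k)_{2m}}{(1+k)_{2m}(1+k)_{2m}(2+2k)_{m}}. \]
   Context: $\mathbb{N}=\{1,2,3,\dots\}$. For $a\in\mathbb{C}$ and $n\in\mathbb{N}_0$, $(a)_0=1$ and $(a)_n=a(a+1)\cdots(a+n-1)$. For $N\in\mathbb{N}_0$, ${}_3F_2\left[\begin{array}{r} a_1,a_2,a_3;\\ b_1,b_2;\end{array}z\right]_N=\sum_{n=0}^{N}\frac{(a_1)_n(a_2)_n(a_3)_n}{(b_1)_n(b_2)_n}\frac{z^n}{n!}$ (the sum of the first $N+1$ terms), defined whenever $(b_1)_n(b_2)_n\neq0$ for $0\le n\le N$. *)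

theory Defs
  imports Complex_Main
begin

definition hyp3F2_trunc ::
  "complex \<Rightarrow> complex \<Rightarrow> complex \<Rightarrow> complex \<Rightarrow> complex \<Rightarrow> complex \<Rightarrow> nat \<Rightarrow> complex" where
  "hyp3F2_trunc a1 a2 a3 b1 b2 z N =
     (\<Sum>n=0..N. (pochhammer a1 n * pochhammer a2 n * pochhammer a3 n)
                / (pochhammer b1 n * pochhammer b2 n) * z ^ n / of_nat (fact n))"

end

theory Submission
  imports Defs
begin

lemma poch_pos: "pochhammer (of_nat a + 1 :: 'a::field_char_0) n = fact (a+n) / fact a"
proof (induction n)
  case 0 then show ?case by simp
next
  case (Suc n)
  have "pochhammer (of_nat a + 1 :: 'a) (Suc n) = fact (a+n) / fact a * (of_nat (a + n) + 1)"
    by (simp only: pochhammer_Suc Suc.IH) (simp add: algebra_simps)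
  also have "\<dots> = fact (a + Suc n) / fact a" by (simp add: algebra_simps)
  finally show ?case .
qed

lemma poch_neg: assumes "n \<le> a"
  shows "pochhammer (- of_nat a :: 'a::field_char_0) n = (-1)^n * fact a / fact (a - n)"
proof -
  have e: "a - n + n = a" using assms by simp
  have "pochhammer (- of_nat a :: 'a) n = (-1)^n * pochhammer (of_nat (a - n) + 1) n"
    using assms by (simp add: pochhammer_minus of_nat_diff)
  also have "\<dots> = (-1)^n * fact a / fact (a - n)" using assms poch_pos[of "a-n" n, where 'a='a] by (simp add: e of_nat_diff)
  finally show ?thesis .
qed

lemma polyid:
  fixes x M K :: "'a::field_char_0"
  shows "2*(2*K+M+2)*(2*K+M+3)*(K+x+1)^2*(2*M+K+1-x)^2 - 4*(K+M+1)^3*(2*K+2*M+3)*(K+1)^2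
   = -(2*M-x)*(K+x+1)^2*((2*K+M+2)*(x+1)^2 - (2*M+1)*(2*K+M+2)*(x+1) - (4*K^3+15*K^2+18*K+7+M*(9*K^2+20*K+11)+M^2*(4*K+4)))
     - x*(2*M+K+1-x)^2*((2*K+M+2)*x^2 - (2*M+1)*(2*K+M+2)*x - (4*K^3+15*K^2+18*K+7+M*(9*K^2+20*K+11)+M^2*(4*K+4)))"
  by (simp add: algebra_simps power2_eq_square power3_eq_cube)

definition Bt :: "nat \<Rightarrow> nat \<Rightarrow> nat \<Rightarrow> 'a::field_char_0" where
  "Bt N k n = (-1)^n * of_nat (N choose n) * (fact (k+n) * fact (N+k-n))^2"

lemma Bt_k: assumes "n \<le> N"
  shows "Bt N (Suc k) n = (Bt N k n :: 'a::field_char_0) * (of_nat k + of_nat n + 1)^2 * (of_nat N + of_nat k + 1 - of_nat n)^2"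
proof -
  have e1: "Suc k + n = Suc (k + n)" by simp
  have e2: "N + Suc k - n = Suc (N + k - n)" using assms by simp
  have e3: "(of_nat (Suc (N + k - n)) :: 'a) = of_nat N + of_nat k + 1 - of_nat n" using assms by (simp add: of_nat_diff)
  show ?thesis unfolding Bt_def e1 e2 fact_Suc e3 by (simp add: algebra_simps power2_eq_square)
qed

lemma Bt_n: assumes "n \<le> N"
  shows "(Bt N k (Suc n) :: 'a::field_char_0) * (of_nat n + 1) * (of_nat N + of_nat k - of_nat n)^2
     = - Bt N k n * (of_nat N - of_nat n) * (of_nat k + of_nat n + 1)^2"
proof (cases "n = N")
  case True then show ?thesis by (simp add: Bt_def)
next
  case False
  have cn: "Suc n * (N choose Suc n) = (N - n) * (N choose n)"
    using binomial_absorption[of n N] binomial_absorb_comp[of N n] by simp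
  have c: "(of_nat (N choose Suc n) :: 'a) * (of_nat n + 1) = of_nat (N choose n) * (of_nat N - of_nat n)"
  proof -
    have "(of_nat (Suc n * (N choose Suc n)) :: 'a) = of_nat ((N - n) * (N choose n))" using cn by simp
    then show ?thesis using assms by (simp add: of_nat_diff algebra_simps)
  qed
  have f1: "N + k - n = Suc (N + k - Suc n)" "k + Suc n = Suc (k + n)" using False assms by auto
  have f2: "(of_nat (Suc (N + k - Suc n)) :: 'a) = of_nat N + of_nat k - of_nat n" using False assms by (simp add: of_nat_diff)
  have g: "\<And>(C::'a) C' X Z s x w u v. C' * x = C * v \<Longrightarrow>
     (-s) * C' * (u * X * Z)^2 * x * w^2 = - (s * C * (X * (w * Z))^2) * v * u^2"
    by (simp add: power2_eq_square)
  show ?thesis unfolding Bt_def f1 fact_Suc power_Suc f2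
    using g[OF c, of "(-1)^n" "fact (k+n)" "fact (N + k - Suc n)" "of_nat N + of_nat k - of_nat n" "of_nat (Suc (k+n))"]
    by (simp add: add_ac mult_ac power_mult_distrib)
qed

definition yv :: "'a::field_char_0 \<Rightarrow> 'a \<Rightarrow> 'a \<Rightarrow> 'a" where
  "yv M K x = (2*K+M+2)*x^2 - (2*M+1)*(2*K+M+2)*x - (4*K^3+15*K^2+18*K+7+M*(9*K^2+20*K+11)+M^2*(4*K+4))"

definition Gt :: "nat \<Rightarrow> nat \<Rightarrow> nat \<Rightarrow> 'a::field_char_0" where
  "Gt m k n = Bt (2*m) k n * of_nat n * (2*of_nat m + of_nat k + 1 - of_nat n)^2 * yv (of_nat m) (of_nat k) (of_nat n)"

lemma term_tele:
  assumes "n \<le> 2*m"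
  shows "2*(2*of_nat k+of_nat m+2)*(2*of_nat k+of_nat m+3) * Bt (2*m) (Suc k) n
       - 4*(of_nat k+of_nat m+1)^3*(2*of_nat k+2*of_nat m+3)*(of_nat k+1)^2 * Bt (2*m) k n
       = (Gt m k (Suc n) - Gt m k n :: 'a::field_char_0)"
proof -
  define M K x where "M = (of_nat m :: 'a)" and "K = (of_nat k :: 'a)" and "x = (of_nat n :: 'a)"
  have b1: "Bt (2*m) (Suc k) n = (Bt (2*m) k n :: 'a) * (K+x+1)^2 * (2*M+K+1-x)^2"
    using Bt_k[OF assms, of k] unfolding M_def K_def x_def by (simp add: add_ac)
  have b2: "Gt m k (Suc n) = - (Bt (2*m) k n :: 'a) * (2*M - x) * (K+x+1)^2 * yv M K (x+1)"
  proof -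
    have "Gt m k (Suc n) = (Bt (2*m) k (Suc n) :: 'a) * (of_nat n + 1) * (of_nat (2*m) + of_nat k - of_nat n)^2 * yv M K (x+1)"
      unfolding Gt_def M_def K_def x_def by (simp add: add_ac)
    also have "\<dots> = - Bt (2*m) k n * (of_nat (2*m) - of_nat n) * (of_nat k + of_nat n + 1)^2 * yv M K (x+1)"
      using Bt_n[OF assms, of k, where 'a='a] by simp
    finally show ?thesis unfolding M_def K_def x_def by (simp add: add_ac)
  qed
  have b3: "Gt m k n = (Bt (2*m) k n :: 'a) * x * (2*M+K+1-x)^2 * yv M K x"
    unfolding Gt_def M_def K_def x_def by simp
  have p: "2*(2*K+M+2)*(2*K+M+3)*(K+x+1)^2*(2*M+K+1-x)^2 - 4*(K+M+1)^3*(2*K+2*M+3)*(K+1)^2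
     = -(2*M-x)*(K+x+1)^2*yv M K (x+1) - x*(2*M+K+1-x)^2*yv M K x"
    unfolding yv_def by (rule polyid)
  show ?thesis unfolding b1 b2 b3 M_def[symmetric] K_def[symmetric]
    using arg_cong[OF p, of "\<lambda>t. Bt (2*m) k n * t"] by (simp add: algebra_simps)
qed

lemma step_sum:
  "2*(2*of_nat k+of_nat m+2)*(2*of_nat k+of_nat m+3) * (\<Sum>n=0..2*m. Bt (2*m) (Suc k) n)
    = 4*(of_nat k+of_nat m+1)^3*(2*of_nat k+2*of_nat m+3)*(of_nat k+1)^2 * (\<Sum>n=0..2*m. (Bt (2*m) k n :: 'a::field_char_0))"
proof -
  have "(\<Sum>n=0..2*m. 2*(2*of_nat k+of_nat m+2)*(2*of_nat k+of_nat m+3) * Bt (2*m) (Suc k) n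
       - 4*(of_nat k+of_nat m+1)^3*(2*of_nat k+2*of_nat m+3)*(of_nat k+1)^2 * Bt (2*m) k n)
     = (\<Sum>n=0..2*m. (Gt m k (Suc n) - Gt m k n :: 'a))"
    by (intro sum.cong refl term_tele) simp
  also have "\<dots> = Gt m k (Suc (2*m)) - Gt m k 0" by (rule sum_Suc_diff) simp
  also have "\<dots> = 0" by (simp add: Gt_def Bt_def)
  finally show ?thesis by (simp add: sum_subtractf sum_distrib_left)
qed

definition Tt :: "nat \<Rightarrow> nat \<Rightarrow> 'a::field_char_0" where
  "Tt m k = fact k ^ 2 * fact (2*m) * fact (k+m) ^ 2 * fact (2*k+2*m+1) / (fact m * fact (2*k+m+1))"

lemma canc: "p \<noteq> 0 \<Longrightarrow> q \<noteq> 0 \<Longrightarrow> 2*p*q*(X/(G*(q*(p*E)))) = 2*(X/(G*E::'a::field))"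
  by (cases "G = 0"; cases "E = 0") (simp_all add: field_simps)
lemma gT:
  fixes A B C E F G K M :: "'a::field_char_0"
  assumes "G \<noteq> 0" "E \<noteq> 0" "2*K+M+2 \<noteq> 0" "2*K+M+3 \<noteq> 0"
  shows "2*(2*K+M+2)*(2*K+M+3) * (((K+1)*A)^2 * F * ((K+M+1)*B)^2 * ((2*K+2*M+3)*((2*K+2*M+2)*C)) / (G * ((2*K+M+3)*((2*K+M+2)*E))))
     = 4*(K+M+1)^3*(2*K+2*M+3)*(K+1)^2 * (A^2*F*B^2*C/(G*E))"
proof -
  have "2*(2*K+M+2)*(2*K+M+3) * (((K+1)*A)^2 * F * ((K+M+1)*B)^2 * ((2*K+2*M+3)*((2*K+2*M+2)*C)) / (G * ((2*K+M+3)*((2*K+M+2)*E))))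
    = 2 * (((K+1)*A)^2 * F * ((K+M+1)*B)^2 * ((2*K+2*M+3)*((2*K+2*M+2)*C)) / (G * E))"
    by (rule canc) (use assms in auto)
  also have "\<dots> = 4*(K+M+1)^3*(2*K+2*M+3)*(K+1)^2 * (A^2*F*B^2*C/(G*E))"
  proof -
    have "2 * (((K+1)*A)^2 * F * ((K+M+1)*B)^2 * ((2*K+2*M+3)*((2*K+2*M+2)*C))) = 4*(K+M+1)^3*(2*K+2*M+3)*(K+1)^2 * (A^2*F*B^2*C)"
      by (simp add: power2_eq_square power3_eq_cube algebra_simps)
    then show ?thesis by (metis times_divide_eq_right)
  qed
  finally show ?thesis .
qed

lemma nzA: "(2*of_nat k+of_nat m+2 :: 'a::field_char_0) \<noteq> 0"
proof -
  have e: "(2*of_nat k+of_nat m+2::'a) = of_nat (2*k+m+2)" by simp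
  show ?thesis unfolding e by (simp only: of_nat_eq_0_iff)
qed

lemma nzB: "(2*of_nat k+of_nat m+3 :: 'a::field_char_0) \<noteq> 0"
proof -
  have e: "(2*of_nat k+of_nat m+3::'a) = of_nat (2*k+m+3)" by simp
  show ?thesis unfolding e by (simp only: of_nat_eq_0_iff)
qed

lemma nzC: "(2*of_nat k+of_nat m+1 :: 'a::field_char_0) \<noteq> 0"
proof -
  have e: "(2*of_nat k+of_nat m+1::'a) = of_nat (2*k+m+1)" by simp
  show ?thesis unfolding e by (simp only: of_nat_eq_0_iff)
qed

lemma T_step:
  "2*(2*of_nat k+of_nat m+2)*(2*of_nat k+of_nat m+3) * Tt m (Suc k)
    = 4*(of_nat k+of_nat m+1)^3*(2*of_nat k+2*of_nat m+3)*(of_nat k+1)^2 * (Tt m k :: 'a::field_char_0)"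
proof -
  have e: "Suc k + m = Suc (k+m)" "2*Suc k+2*m+1 = Suc (Suc (2*k+2*m+1))"
     "2*Suc k+m+1 = Suc (Suc (2*k+m+1))" by simp_all
  have f1: "fact (Suc k) = (of_nat k + 1) * (fact k::'a)" by (simp add: algebra_simps)
  have f2: "fact (Suc k + m) = (of_nat k + of_nat m + 1) * (fact (k+m)::'a)"
    unfolding e fact_Suc by (simp add: algebra_simps)
  have f3: "fact (2*Suc k+2*m+1) = (2*of_nat k+2*of_nat m+3)*((2*of_nat k+2*of_nat m+2)*(fact (2*k+2*m+1)::'a))"
    unfolding e(2) fact_Suc[of "Suc (2*k+2*m+1)"] fact_Suc[of "2*k+2*m+1"] by (simp add: algebra_simps)
  have f4: "fact (2*Suc k+m+1) = (2*of_nat k+of_nat m+3)*((2*of_nat k+of_nat m+2)*(fact (2*k+m+1)::'a))"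
    unfolding e(3) fact_Suc[of "Suc (2*k+m+1)"] fact_Suc[of "2*k+m+1"] by (simp add: algebra_simps)
  show ?thesis unfolding Tt_def f1 f2 f3 f4
    by (rule gT) (rule fact_nonzero, rule fact_nonzero, rule nzA, rule nzB)
qed

lemma base_sum: "(\<Sum>n=0..2*m. Bt (2*m) 0 n) = (Tt m 0 :: 'a::field_char_0)"
proof -
  define N where "N = 2*m"
  define a :: "nat \<Rightarrow> 'a" where "a n = fact n * fact (N+1-n)" for n
  define D :: "nat \<Rightarrow> 'a" where "D n = (-1)^n * a n" for n
  have t: "of_nat (N+2) * Bt N 0 n = fact N * (D n - D (Suc n))" if "n \<le> N" for n
  proof -
    have bf: "fact n * fact (N-n) * (N choose n) = fact N" using binomial_fact_lemma[OF that] .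
    have bf': "(fact n * fact (N-n) * of_nat (N choose n) :: 'a) = fact N"
      using arg_cong[OF bf, of "of_nat :: nat \<Rightarrow> 'a"] by simp
    have e1: "N + 1 - n = Suc (N - n)" using that by simp
    have e2: "(of_nat (Suc (N - n)) :: 'a) = of_nat N + 1 - of_nat n" using that by (simp add: of_nat_diff)
    have "Bt N 0 n = (-1)^n * (fact n * fact (N-n) * of_nat (N choose n)) * (fact n * fact (N - n) :: 'a)"
      unfolding Bt_def by (simp add: power2_eq_square mult_ac)
    also have "\<dots> = (-1)^n * fact N * (fact n * fact (N - n))" unfolding bf' by simp
    finally have "Bt N 0 n = (-1)^n * fact N * (fact n * fact (N - n) :: 'a)" .
    moreover have "D n - D (Suc n) = (-1)^n * (fact n * fact (N - n)) * (of_nat N + 2)"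
      unfolding D_def a_def e1 fact_Suc e2 using that by (simp add: algebra_simps)
    ultimately show ?thesis by (simp add: algebra_simps)
  qed
  have "of_nat (N+2) * (\<Sum>n=0..N. Bt N 0 n) = (\<Sum>n=0..N. fact N * (D n - D (Suc n)) :: 'a)"
    unfolding sum_distrib_left by (intro sum.cong refl t) simp
  also have "\<dots> = fact N * (D 0 - D (Suc N))"
  proof -
    have "(\<Sum>n=0..N. D n - D (Suc n)) = - (\<Sum>n=0..N. D (Suc n) - D n)"
      by (simp add: sum_negf[symmetric])
    also have "\<dots> = D 0 - D (Suc N)" by (subst sum_Suc_diff) simp_all
    finally show ?thesis by (simp add: sum_distrib_left[symmetric])
  qed
  also have "\<dots> = fact N * (2 * fact (N+1))"
    unfolding D_def a_def N_def by simp
  finally have h: "of_nat (N+2) * (\<Sum>n=0..N. Bt N 0 n) = (fact N * (2 * fact (N+1)) :: 'a)" .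
  have "Tt m 0 = (fact N * fact m ^ 2 * fact (N+1) / (fact m * (of_nat (m+1) * fact m)) :: 'a)"
    unfolding Tt_def N_def by simp
  also have "\<dots> = fact N * fact (N+1) / of_nat (m+1)"
    by (simp add: power2_eq_square)
  finally have t0: "Tt m 0 = (fact N * fact (N+1) / of_nat (m+1) :: 'a)" .
  have n2: "(of_nat (N+2) :: 'a) = 2 * of_nat (m+1)" unfolding N_def by simp
  have "(\<Sum>n=0..N. Bt N 0 n) = (fact N * (2 * fact (N+1)) / of_nat (N+2) :: 'a)"
  proof -
    have nzN: "(of_nat (N+2)::'a) \<noteq> 0" by (simp only: of_nat_eq_0_iff)
    show ?thesis by (subst nonzero_eq_divide_eq[OF nzN]) (metis h mult.commute)
  qed
  also have "\<dots> = Tt m 0" unfolding t0 n2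
    by (subst mult.left_commute) (rule mult_divide_mult_cancel_left, simp)
  finally show ?thesis unfolding N_def .
qed

lemma main_sum: "(\<Sum>n=0..2*m. Bt (2*m) k n) = (Tt m k :: 'a::field_char_0)"
proof (induction k)
  case 0 then show ?case by (rule base_sum)
next
  case (Suc k)
  have nz: "2*(2*of_nat k+of_nat m+2)*(2*of_nat k+of_nat m+3) \<noteq> (0::'a)"
    by (metis mult_eq_0_iff nzA nzB zero_neq_numeral)
  show ?case using step_sum[of k m, where 'a='a] T_step[of k m, where 'a='a] Suc.IH nz
    by (metis mult_left_cancel)
qed

lemma gS:
  fixes s F D fk P Q fn X :: "'a::field_char_0"
  assumes "s*s = 1" "F \<noteq> 0" "D \<noteq> 0" "fk \<noteq> 0" "P \<noteq> 0" "Q \<noteq> 0" "fn \<noteq> 0"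
  shows "s*F/D * (X/fk) * (X/fk) / ((s*P/Q)*(s*P/Q)) * 1 / fn = s*(F/(fn*D))*(X*Q)^2/(fk*P)^2"
proof -
  have s0: "s \<noteq> 0" using assms(1) by auto
  have "s*F/D * (X/fk) * (X/fk) / ((s*P/Q)*(s*P/Q)) * 1 / fn = s*F*X*X*Q*Q / (D*fk*fk*(s*s)*P*P*fn)"
    using assms s0 by (simp add: field_simps)
  also have "\<dots> = s*F*X*X*Q*Q / (D*fk*fk*P*P*fn)" using assms(1) by simp
  also have "\<dots> = s*(F/(fn*D))*(X*Q)^2/(fk*P)^2"
    using assms by (simp add: field_simps power2_eq_square)
  finally show ?thesis .
qed

lemma gR:
  fixes A fk F fm E f1 B D :: "'a::field_char_0"
  assumes "fk \<noteq> 0" "fm \<noteq> 0" "f1 \<noteq> 0" "B \<noteq> 0" "D \<noteq> 0"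
  shows "(A/fk) * (A/fk) * (F/fm) * (E/f1) / ((B/fk) * (B/fk) * (D/f1))
       = (fk^2 * F * A^2 * E / (fm * D)) / (fk * B)^2"
  using assms by (simp add: field_simps power2_eq_square)

theorem mainTheorem11:
  fixes m k :: nat
  assumes "m \<ge> 1" and "k \<ge> 1"
  shows "hyp3F2_trunc (- 2 * of_nat m) (1 + of_nat k) (1 + of_nat k)
            (- 2 * of_nat m - of_nat k) (- 2 * of_nat m - of_nat k) 1 (2 * m)
       = (pochhammer (1 + of_nat k) m * pochhammer (1 + of_nat k) m * 2 ^ (2 * m)
            * pochhammer (1 / 2) m * pochhammer (2 + 2 * of_nat k) (2 * m))
         / (pochhammer (1 + of_nat k) (2 * m) * pochhammer (1 + of_nat k) (2 * m)
            * pochhammer (2 + 2 * of_nat k) m)"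
proof -
  define c :: complex where "c = (fact k * fact (2*m+k))^2"
  have r1: "(- 2 * of_nat m :: complex) = - of_nat (2*m)" by simp
  have r2: "(1 + of_nat k :: complex) = of_nat k + 1" by simp
  have r3: "(- 2 * of_nat m - of_nat k :: complex) = - of_nat (2*m+k)" by simp
  have r4: "(2 + 2 * of_nat k :: complex) = of_nat (2*k+1) + 1" by simp
  have summand: "pochhammer (- of_nat (2*m)) n * pochhammer (of_nat k + 1) n * pochhammer (of_nat k + 1) n
       / (pochhammer (- of_nat (2*m+k)) n * pochhammer (- of_nat (2*m+k)) n) * 1 ^ n / of_nat (fact n)
       = (Bt (2*m) k n :: complex) / c" if "n \<in> {0..2*m}" for n
  proof -
    have n1: "n \<le> 2*m" "n \<le> 2*m+k" using that by auto
    have "pochhammer (- of_nat (2*m)) n * pochhammer (of_nat k + 1) n * pochhammer (of_nat k + 1) n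
       / (pochhammer (- of_nat (2*m+k)) n * pochhammer (- of_nat (2*m+k)) n) * 1 ^ n / of_nat (fact n)
       = (-1)^n * fact (2*m) / fact (2*m-n) * (fact (k+n) / fact k) * (fact (k+n) / fact k)
         / (((-1)^n * fact (2*m+k) / fact (2*m+k-n)) * ((-1)^n * fact (2*m+k) / fact (2*m+k-n))) * 1 / (fact n :: complex)"
      unfolding poch_neg[OF n1(1)] poch_neg[OF n1(2)] poch_pos by simp
    also have "\<dots> = (-1)^n * (fact (2*m) / (fact n * fact (2*m-n))) * (fact (k+n) * fact (2*m+k-n))^2 / (fact k * fact (2*m+k))^2"
      by (rule gS) simp_all
    also have "\<dots> = (Bt (2*m) k n :: complex) / c"
      unfolding Bt_def c_def binomial_fact[OF n1(1)] by (simp add: add_ac)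
    finally show ?thesis .
  qed
  have L: "hyp3F2_trunc (- 2 * of_nat m) (1 + of_nat k) (1 + of_nat k)
            (- 2 * of_nat m - of_nat k) (- 2 * of_nat m - of_nat k) 1 (2 * m) = Tt m k / c"
  proof -
    have "hyp3F2_trunc (- 2 * of_nat m) (1 + of_nat k) (1 + of_nat k)
            (- 2 * of_nat m - of_nat k) (- 2 * of_nat m - of_nat k) 1 (2 * m)
        = (\<Sum>n=0..2*m. (Bt (2*m) k n :: complex) / c)"
      unfolding hyp3F2_trunc_def r3 unfolding r1 r2 by (rule sum.cong[OF refl summand])
    also have "\<dots> = Tt m k / c" unfolding sum_divide_distrib[symmetric] main_sum ..
    finally show ?thesis .
  qed
  have h2: "(2::complex) ^ (2*m) * pochhammer (1/2) m = fact (2*m) / fact m"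
    using fact_double[of m, where 'a=complex] by (simp add: field_simps)
  have R: "(pochhammer (1 + of_nat k) m * pochhammer (1 + of_nat k) m * 2 ^ (2 * m)
            * pochhammer (1 / 2) m * pochhammer (2 + 2 * of_nat k) (2 * m))
         / (pochhammer (1 + of_nat k) (2 * m) * pochhammer (1 + of_nat k) (2 * m)
            * pochhammer (2 + 2 * of_nat k) m) = (Tt m k :: complex) / c"
  proof -
    have "(pochhammer (1 + of_nat k) m * pochhammer (1 + of_nat k) m * 2 ^ (2 * m)
            * pochhammer (1 / 2) m * pochhammer (2 + 2 * of_nat k) (2 * m))
         / (pochhammer (1 + of_nat k) (2 * m) * pochhammer (1 + of_nat k) (2 * m)
            * pochhammer (2 + 2 * of_nat k) m)
       = (pochhammer (1 + of_nat k) m * pochhammer (1 + of_nat k) m * (2 ^ (2 * m)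
            * pochhammer (1 / 2) m) * pochhammer (2 + 2 * of_nat k) (2 * m))
         / (pochhammer (1 + of_nat k) (2 * m) * pochhammer (1 + of_nat k) (2 * m)
            * pochhammer (2 + 2 * of_nat k) m :: complex)" by (simp only: mult.assoc)
    also have "\<dots> = (fact (k+m)/fact k) * (fact (k+m)/fact k) * (fact (2*m)/fact m) * (fact (2*k+1+2*m)/fact (2*k+1))
        / ((fact (k+2*m)/fact k) * (fact (k+2*m)/fact k) * (fact (2*k+1+m)/fact (2*k+1)))"
      unfolding h2 r2 r4 poch_pos ..
    also have "\<dots> = (fact k ^ 2 * fact (2*m) * fact (k+m) ^ 2 * fact (2*k+1+2*m) / (fact m * fact (2*k+1+m))) / (fact k * fact (k+2*m))^2"
      by (rule gR) (rule fact_nonzero)+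
    also have "\<dots> = (Tt m k :: complex) / c"
      unfolding Tt_def c_def by (simp add: add_ac)
    finally show ?thesis .
  qed
  show ?thesis unfolding L R ..
qed

end
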